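(* For the Data Collection process on a fixed connected weighted graph with fixed sink, sources and relative rate vector $\bm{J}$, started from the all-empty state, for every $t\ge0$ and every node $u\in V\setminus\{u_s\}$, the probability $\Pr[Q^\beta_t(u)>0]$ is a non-decreasing function of $\beta$ (over $\beta>0$ with $\beta\bm{J}_v\le1$ for all $v$).
   Context: Data Collection process: on a connected undirected graph $G=(V,E,w)$ with positive weights and $d_u=\sum_{v:(u,v)\in E}w_{uv}$, fix a sink $u_s\in V$ and a set of sources $V_s\subseteq V\setminus\{u_s\}$, with relative rate vector $\bm{J}$ ($\bm{J}_v>0$ for $v\in V_s$, $0$ for other $v\ne u_s$, $\bm{J}_{u_s}=-\sum_{v\ne u_s}\bm{J}_v$) and $\beta>0$ with $\beta\bm{J}_v\le1$. The process with parameter $\beta$ is the discrete-time Markov chain $\{Q^\beta_t\}$ on $(\mathbb{N}\cup\{0\})^{V\setminus\{u_s\}}$ ($Q^\beta_t(v)$ = queue size at $v$) where at each step each $v\in V_s$ independently generates a new packet with probability $\beta\bm{J}_v$ into its queue, and each $u\ne u_s$ with nonempty queue picks one packet and a neighbor $v$ with probability $w_{uv}/d_u$ and transmits the packet to $v$ (added to $v$'s queue if $v\ne u_s$, removed from the system if $v=u_s$). *)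

theory Defs
  imports "HOL-Probability.Probability"
begin

text \<open>Weighted undirected graph on the finite vertex set V, given by a symmetric
nonnegative weight function w (w u v > 0 iff {u,v} is an edge; w vanishes outside V).\<close>

definition wgraph :: "'a set \<Rightarrow> ('a \<Rightarrow> 'a \<Rightarrow> real) \<Rightarrow> bool" where
  "wgraph V w \<longleftrightarrow> finite V \<and>
     (\<forall>u v. w u v = w v u) \<and> (\<forall>u v. 0 \<le> w u v) \<and>
     (\<forall>u v. w u v \<noteq> 0 \<longrightarrow> u \<in> V \<and> v \<in> V)"

definition connected_wgraph :: "'a set \<Rightarrow> ('a \<Rightarrow> 'a \<Rightarrow> real) \<Rightarrow> bool" where
  "connected_wgraph V w \<longleftrightarrow> wgraph V w \<and> V \<noteq> {} \<and>
     (\<forall>u\<in>V. \<forall>v\<in>V. (u, v) \<in> {(x, y). 0 < w x y}\<^sup>*)"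

definition wdeg :: "'a set \<Rightarrow> ('a \<Rightarrow> 'a \<Rightarrow> real) \<Rightarrow> 'a \<Rightarrow> real" where
  "wdeg V w u = (\<Sum>v\<in>V. w u v)"

definition nbr_pmf :: "'a set \<Rightarrow> ('a \<Rightarrow> 'a \<Rightarrow> real) \<Rightarrow> 'a \<Rightarrow> 'a pmf" where
  "nbr_pmf V w u = embed_pmf (\<lambda>v. if v \<in> V then w u v / wdeg V w u else 0)"

text \<open>States are queue vectors q :: 'a \<Rightarrow> nat
(only entries on V - {us} are meaningful; all others are kept 0).
First every source v generates a packet with probability beta * J v; then every
non-sink node with nonempty queue sends one packet to a random neighbour; packets
arriving at the sink are removed.\<close>
definition dc_step :: "'a set \<Rightarrow> ('a \<Rightarrow> 'a \<Rightarrow> real) \<Rightarrow> 'a \<Rightarrow> 'a set \<Rightarrow> ('a \<Rightarrow> real)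
     \<Rightarrow> real \<Rightarrow> ('a \<Rightarrow> nat) \<Rightarrow> ('a \<Rightarrow> nat) pmf" where
  "dc_step V w us Vs J \<beta> q =
     do { g \<leftarrow> Pi_pmf Vs False (\<lambda>v. bernoulli_pmf (\<beta> * J v));
          let q1 = (\<lambda>x. q x + (if g x then 1 else 0));
          let S = {u \<in> V - {us}. 0 < q1 u};
          c \<leftarrow> Pi_pmf S us (\<lambda>u. nbr_pmf V w u);
          return_pmf (\<lambda>x. if x \<in> V - {us}
                           then q1 x - (if 0 < q1 x then 1 else 0) + card {u \<in> S. c u = x}
                           else 0) }"

fun dc_dist :: "'a set \<Rightarrow> ('a \<Rightarrow> 'a \<Rightarrow> real) \<Rightarrow> 'a \<Rightarrow> 'a set \<Rightarrow> ('a \<Rightarrow> real)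
     \<Rightarrow> real \<Rightarrow> nat \<Rightarrow> ('a \<Rightarrow> nat) pmf" where
  "dc_dist V w us Vs J \<beta> 0 = return_pmf (\<lambda>_. 0)"
| "dc_dist V w us Vs J \<beta> (Suc t) = dc_dist V w us Vs J \<beta> t \<bind> dc_step V w us Vs J \<beta>"

definition dc_data :: "'a set \<Rightarrow> ('a \<Rightarrow> 'a \<Rightarrow> real) \<Rightarrow> 'a \<Rightarrow> 'a set \<Rightarrow> ('a \<Rightarrow> real) \<Rightarrow> bool" where
  "dc_data V w us Vs J \<longleftrightarrow> connected_wgraph V w \<and> us \<in> V \<and> Vs \<subseteq> V - {us} \<and>
     (\<forall>v\<in>Vs. 0 < J v) \<and> (\<forall>v\<in>V - {us} - Vs. J v = 0) \<and>
     J us = - (\<Sum>v\<in>V - {us}. J v)"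

definition admissible_beta :: "'a set \<Rightarrow> ('a \<Rightarrow> real) \<Rightarrow> real \<Rightarrow> bool" where
  "admissible_beta V J \<beta> \<longleftrightarrow> 0 < \<beta> \<and> (\<forall>v\<in>V. \<beta> * J v \<le> 1)"

end

theory Submission
  imports Defs
begin

lemma rel_Pi_pmf:
  assumes fin: "finite A" and Rd: "R d d" and pq: "\<And>x. x \<in> A \<Longrightarrow> rel_pmf R (p x) (q x)"
  shows "rel_pmf (\<lambda>f g. \<forall>x. R (f x) (g x)) (Pi_pmf A d p) (Pi_pmf A d q)"
proof -
  have "\<forall>x\<in>A. \<exists>c. (\<forall>a b. (a, b) \<in> set_pmf c \<longrightarrow> R a b) \<and> map_pmf fst c = p x \<and> map_pmf snd c = q x"
    using pq by (metis rel_pmf.simps)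
  then obtain c where c: "\<And>x. x \<in> A \<Longrightarrow> (\<forall>a b. (a, b) \<in> set_pmf (c x) \<longrightarrow> R a b) \<and> map_pmf fst (c x) = p x \<and> map_pmf snd (c x) = q x"
    by metis
  have 1: "Pi_pmf A d p = map_pmf (\<lambda>h. fst \<circ> h) (Pi_pmf A (d, d) c)"
  proof -
    have "Pi_pmf A d p = Pi_pmf A d (\<lambda>x. map_pmf fst (c x))"
      by (intro Pi_pmf_cong) (auto simp: c)
    also have "\<dots> = map_pmf (\<lambda>h. fst \<circ> h) (Pi_pmf A (d, d) c)"
      by (rule Pi_pmf_map) (auto simp: fin)
    finally show ?thesis .
  qed
  have 2: "Pi_pmf A d q = map_pmf (\<lambda>h. snd \<circ> h) (Pi_pmf A (d, d) c)"
  proof -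
    have "Pi_pmf A d q = Pi_pmf A d (\<lambda>x. map_pmf snd (c x))"
      by (intro Pi_pmf_cong) (auto simp: c)
    also have "\<dots> = map_pmf (\<lambda>h. snd \<circ> h) (Pi_pmf A (d, d) c)"
      by (rule Pi_pmf_map) (auto simp: fin)
    finally show ?thesis .
  qed
  show ?thesis unfolding 1 2 pmf.rel_map
  proof (rule rel_pmf_reflI)
    fix h assume h: "h \<in> set_pmf (Pi_pmf A (d, d) c)"
    show "\<forall>x. R ((fst \<circ> h) x) ((snd \<circ> h) x)"
    proof
      fix x
      show "R ((fst \<circ> h) x) ((snd \<circ> h) x)"
      proof (cases "x \<in> A")
        case True
        then have "h x \<in> set_pmf (c x)" using h by (auto simp: set_Pi_pmf[OF fin] PiE_dflt_def)
        then show ?thesis using c[OF True] by (cases "h x") auto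
      next
        case False
        then have "h x = (d, d)" using h by (auto simp: set_Pi_pmf[OF fin] PiE_dflt_def)
        then show ?thesis using Rd by simp
      qed
    qed
  qed
qed

lemma bernoulli_split:
  assumes "0 \<le> p1" "p1 \<le> p2" "p2 \<le> 1"
  shows "bernoulli_pmf p1 = bernoulli_pmf p2 \<bind> (\<lambda>b. if b then bernoulli_pmf (p1 / p2) else return_pmf False)"
proof (rule pmf_eqI)
  fix x :: bool
  have d: "0 \<le> p1 / p2" "p1 / p2 \<le> 1" using assms by (auto simp: divide_le_eq_1)
  have e: "p2 * (p1 / p2) = p1" using assms by (cases "p2 = 0") auto
  show "pmf (bernoulli_pmf p1) x = pmf (bernoulli_pmf p2 \<bind> (\<lambda>b. if b then bernoulli_pmf (p1 / p2) else return_pmf False)) x"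
    using assms d e by (cases x) (auto simp: algebra_simps pmf_bind integral_measure_pmf[where A=UNIV] UNIV_bool)
qed

lemma rel_bernoulli:
  assumes "0 \<le> p1" "p1 \<le> p2" "p2 \<le> 1"
  shows "rel_pmf (\<lambda>a b. a \<longrightarrow> b) (bernoulli_pmf p1) (bernoulli_pmf p2)"
proof -
  have "rel_pmf (\<lambda>a b. a \<longrightarrow> b) (bernoulli_pmf p2 \<bind> (\<lambda>b. if b then bernoulli_pmf (p1 / p2) else return_pmf False))
          (bernoulli_pmf p2 \<bind> return_pmf)"
    by (rule rel_pmf_bindI[where R="(=)"]) (auto simp: rel_pmf_return_pmf2 pmf.rel_eq)
  then show ?thesis using bernoulli_split[OF assms] by (simp add: bind_return_pmf')
qed


lemma rel_step:
  assumes fin: "finite V" and Vs: "Vs \<subseteq> V"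
    and bern: "\<And>v. v \<in> Vs \<Longrightarrow> 0 \<le> \<beta>1 * J v \<and> \<beta>1 * J v \<le> \<beta>2 * J v \<and> \<beta>2 * J v \<le> 1"
    and le: "\<forall>x. q x \<le> q' x"
  shows "rel_pmf (\<lambda>a b. \<forall>x. a x \<le> b x) (dc_step V w us Vs J \<beta>1 q) (dc_step V w us Vs J \<beta>2 q')"
  unfolding dc_step_def Let_def
proof (rule rel_pmf_bindI[where R="\<lambda>f g. \<forall>x. f x \<le> g x"], goal_cases)
  case 1
  have finVs: "finite Vs" using fin Vs finite_subset by blast
  show "rel_pmf (\<lambda>f g. \<forall>x. f x \<le> g x) (Pi_pmf Vs False (\<lambda>v. bernoulli_pmf (\<beta>1 * J v)))
          (Pi_pmf Vs False (\<lambda>v. bernoulli_pmf (\<beta>2 * J v)))"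
    by (rule rel_Pi_pmf[OF finVs]) (auto intro: rel_bernoulli dest: bern)
next
  case (2 g g')
  note gg = 2
  define q1 where "q1 = (\<lambda>x. q x + (if g x then 1 else 0))"
  define q1' where "q1' = (\<lambda>x. q' x + (if g' x then 1 else 0))"
  define S where "S = {u \<in> V - {us}. 0 < q1 u}"
  define S' where "S' = {u \<in> V - {us}. 0 < q1' u}"
  have q1le: "q1 x \<le> q1' x" for x
  proof -
    have "q x \<le> q' x" "g x \<le> g' x" using le gg by auto
    then show ?thesis unfolding q1_def q1'_def by (cases "g x"; cases "g' x") auto
  qed
  have SS: "S \<subseteq> S'" unfolding S_def S'_def using q1le by (auto intro: less_le_trans)
  have finS': "finite S'" unfolding S'_def using fin by auto
  have P: "Pi_pmf S us (nbr_pmf V w) = map_pmf (\<lambda>f x. if x \<in> S then f x else us) (Pi_pmf S' us (nbr_pmf V w))"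
    by (rule Pi_pmf_subset[OF finS' SS])
  have "rel_pmf (\<lambda>a b. \<forall>x. a x \<le> b x)
     (Pi_pmf S us (nbr_pmf V w) \<bind>
      (\<lambda>c. return_pmf (\<lambda>x. if x \<in> V - {us} then q1 x - (if 0 < q1 x then 1 else 0) + card {u \<in> S. c u = x} else 0)))
     (Pi_pmf S' us (nbr_pmf V w) \<bind>
      (\<lambda>c. return_pmf (\<lambda>x. if x \<in> V - {us} then q1' x - (if 0 < q1' x then 1 else 0) + card {u \<in> S'. c u = x} else 0)))"
    unfolding P
    unfolding map_pmf_def bind_assoc_pmf bind_return_pmf
  proof (rule rel_pmf_bindI[where R="(=)"])
    show "rel_pmf (=) (Pi_pmf S' us (nbr_pmf V w)) (Pi_pmf S' us (nbr_pmf V w))"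
      by (simp add: pmf.rel_eq)
  next
    fix c c' :: "'a \<Rightarrow> 'a" assume "c = c'"
    have card: "card {u \<in> S. (if u \<in> S then c u else us) = x} \<le> card {u \<in> S'. c u = x}" for x
      by (rule card_mono) (use finS' SS in auto)
    have f: "q1 x - (if 0 < q1 x then 1 else 0) \<le> q1' x - (if 0 < q1' x then 1 else 0)" for x
      using q1le[of x] by auto
    show "rel_pmf (\<lambda>a b. \<forall>x. a x \<le> b x)
      (return_pmf (\<lambda>x. if x \<in> V - {us} then q1 x - (if 0 < q1 x then 1 else 0) + card {u \<in> S. (if u \<in> S then c u else us) = x} else 0))
      (return_pmf (\<lambda>x. if x \<in> V - {us} then q1' x - (if 0 < q1' x then 1 else 0) + card {u \<in> S'. c' u = x} else 0))"
    proof -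
      have "\<forall>x. (if x \<in> V - {us} then q1 x - (if 0 < q1 x then 1 else 0) + card {u \<in> S. (if u \<in> S then c u else us) = x} else 0)
        \<le> (if x \<in> V - {us} then q1' x - (if 0 < q1' x then 1 else 0) + card {u \<in> S'. c' u = x} else 0)"
      proof
        fix x
        show "(if x \<in> V - {us} then q1 x - (if 0 < q1 x then 1 else 0) + card {u \<in> S. (if u \<in> S then c u else us) = x} else 0)
        \<le> (if x \<in> V - {us} then q1' x - (if 0 < q1' x then 1 else 0) + card {u \<in> S'. c' u = x} else 0)"
          using add_mono[OF f card, of x x] \<open>c = c'\<close> by (simp only: if_split) simp
      qed
      then show ?thesis by (simp only: rel_pmf_return_pmf1 set_return_pmf) blast
    qed
  qed
  then show ?case unfolding q1_def q1'_def S_def S'_def by simp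
qed

theorem claim3:
  fixes V :: "'a set" and w :: "'a \<Rightarrow> 'a \<Rightarrow> real" and us :: 'a and Vs :: "'a set"
    and J :: "'a \<Rightarrow> real" and t :: nat and u :: 'a and \<beta>1 \<beta>2 :: real
  assumes "dc_data V w us Vs J"
    and "u \<in> V - {us}"
    and "admissible_beta V J \<beta>1" and "admissible_beta V J \<beta>2"
    and "\<beta>1 \<le> \<beta>2"
  shows "measure_pmf.prob (dc_dist V w us Vs J \<beta>1 t) {q. 0 < q u}
       \<le> measure_pmf.prob (dc_dist V w us Vs J \<beta>2 t) {q. 0 < q u}"
proof -
  have fin: "finite V" and Vs: "Vs \<subseteq> V" and Jpos: "\<And>v. v \<in> Vs \<Longrightarrow> 0 < J v"
    using assms(1) by (auto simp: dc_data_def connected_wgraph_def wgraph_def)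
  have bern: "0 \<le> \<beta>1 * J v \<and> \<beta>1 * J v \<le> \<beta>2 * J v \<and> \<beta>2 * J v \<le> 1" if v: "v \<in> Vs" for v
  proof -
    have "0 < J v" "v \<in> V" using Jpos v Vs by auto
    then show ?thesis using assms(3,4,5) by (auto simp: admissible_beta_def intro: mult_right_mono)
  qed
  have rel: "rel_pmf (\<lambda>a b. \<forall>x. a x \<le> b x) (dc_dist V w us Vs J \<beta>1 t) (dc_dist V w us Vs J \<beta>2 t)"
  proof (induction t)
    case 0
    then show ?case by (simp add: rel_pmf_return_pmf1)
  next
    case (Suc t)
    then show ?case by (simp del: dc_step_def) (rule rel_pmf_bindI, assumption, rule rel_step[OF fin Vs bern], auto)
  qed
  have "measure_pmf.prob (dc_dist V w us Vs J \<beta>1 t) {q. 0 < q u}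
     \<le> measure_pmf.prob (dc_dist V w us Vs J \<beta>2 t) {y. \<exists>x\<in>{q. 0 < q u}. \<forall>z. x z \<le> y z}"
    by (rule rel_pmf_measureD[OF rel])
  also have "\<dots> \<le> measure_pmf.prob (dc_dist V w us Vs J \<beta>2 t) {q. 0 < q u}"
    by (rule measure_pmf.finite_measure_mono) (auto intro: less_le_trans)
  finally show ?thesis .
qed

end
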